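(* Let $N$ be a tree-child phylogenetic network such that no two parents of a hybrid node are connected by a path, and let $N'=(V',E')$ be its contracted version. For every $u\in V'$ let $M_u=\{w\in V'\mid C^{(N')}(w)\subsetneq C^{(N')}(u)\}$. Then the maximal elements of $M_u$ with respect to the path ordering on $N'$ are exactly the children of $u$ in $N'$.
   Context: A DAG is labeled in a finite set $S$ if its leaves (out-degree 0) are bijectively labeled by $S$. A tree node has in-degree at most 1; a hybrid node has in-degree greater than 1; a tree child is a child that is a tree node. A tree-child phylogenetic network is a rooted DAG labeled in $S$ in which every non-leaf node has at least one tree child, no tree node has out-degree 1, and every hybrid node has out-degree exactly 1. The condition that no two parents of a hybrid node are connected by a path means: if $u_1,u_2$ are the parents of a hybrid node, there is no path $u_1\rightsquigarrow u_2$ nor $u_2\rightsquigarrow u_1$. The contracted version $N'$ of $N$ is obtained as follows: for every hybrid node $u$ of $N$, with only child $\bar u$ whose children are $\bar u_1,\dots,\bar u_k$, remove $\bar u$ and all arcs incident to it, and add arcs $(u,\bar u_1),\dots,(u,\bar u_k)$; thus $V'$ is the set of nodes of $N$ other than children of hybrid nodes. $C^{(N')}(w)$ is the set of leaves that are descendants of $w$ in $N'$. The path ordering on $N'$ is $x\ge y$ iff there is a path from $x$ to $y$ in $N'$. *)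

theory Defs
  imports Main
begin

definition parents :: "('a \<times> 'a) set \<Rightarrow> 'a \<Rightarrow> 'a set" where
  "parents E v = {u. (u, v) \<in> E}"

definition children :: "('a \<times> 'a) set \<Rightarrow> 'a \<Rightarrow> 'a set" where
  "children E u = {v. (u, v) \<in> E}"

definition indeg :: "('a \<times> 'a) set \<Rightarrow> 'a \<Rightarrow> nat" where
  "indeg E v = card (parents E v)"

definition outdeg :: "('a \<times> 'a) set \<Rightarrow> 'a \<Rightarrow> nat" where
  "outdeg E u = card (children E u)"

definition leaves :: "'a set \<Rightarrow> ('a \<times> 'a) set \<Rightarrow> 'a set" where
  "leaves V E = {v \<in> V. outdeg E v = 0}"

definition is_tree_node :: "('a \<times> 'a) set \<Rightarrow> 'a \<Rightarrow> bool" where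
  "is_tree_node E v \<longleftrightarrow> indeg E v \<le> 1"

definition is_hybrid :: "('a \<times> 'a) set \<Rightarrow> 'a \<Rightarrow> bool" where
  "is_hybrid E v \<longleftrightarrow> indeg E v > 1"

definition rooted_dag :: "'a set \<Rightarrow> ('a \<times> 'a) set \<Rightarrow> bool" where
  "rooted_dag V E \<longleftrightarrow> finite V \<and> E \<subseteq> V \<times> V \<and> acyclic E \<and>
     (\<exists>r\<in>V. \<forall>v\<in>V. (r, v) \<in> E\<^sup>*)"

definition labeled_in :: "'a set \<Rightarrow> ('a \<times> 'a) set \<Rightarrow> ('a \<Rightarrow> 's) \<Rightarrow> 's set \<Rightarrow> bool" where
  "labeled_in V E lab S \<longleftrightarrow> bij_betw lab (leaves V E) S"

definition tree_child_network ::
  "'a set \<Rightarrow> ('a \<times> 'a) set \<Rightarrow> ('a \<Rightarrow> 's) \<Rightarrow> 's set \<Rightarrow> bool" where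
  "tree_child_network V E lab S \<longleftrightarrow>
     rooted_dag V E \<and> labeled_in V E lab S \<and>
     (\<forall>v\<in>V. v \<notin> leaves V E \<longrightarrow> (\<exists>c\<in>children E v. is_tree_node E c)) \<and>
     (\<forall>v\<in>V. is_tree_node E v \<longrightarrow> outdeg E v \<noteq> 1) \<and>
     (\<forall>v\<in>V. is_hybrid E v \<longrightarrow> outdeg E v = 1)"

definition hybrid_parents_unconnected :: "'a set \<Rightarrow> ('a \<times> 'a) set \<Rightarrow> bool" where
  "hybrid_parents_unconnected V E \<longleftrightarrow>
     (\<forall>h\<in>V. is_hybrid E h \<longrightarrow>
        (\<forall>u1\<in>parents E h. \<forall>u2\<in>parents E h. u1 \<noteq> u2 \<longrightarrow>
           (u1, u2) \<notin> E\<^sup>* \<and> (u2, u1) \<notin> E\<^sup>*))"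

text \<open>Contracted version: remove every child of a hybrid node and connect the
  hybrid node directly to the children of its child.\<close>
definition contracted_nodes :: "'a set \<Rightarrow> ('a \<times> 'a) set \<Rightarrow> 'a set" where
  "contracted_nodes V E = V - {c. \<exists>u\<in>V. is_hybrid E u \<and> (u, c) \<in> E}"

definition contracted_arcs :: "'a set \<Rightarrow> ('a \<times> 'a) set \<Rightarrow> ('a \<times> 'a) set" where
  "contracted_arcs V E =
     {(x, y). (x, y) \<in> E \<and> x \<in> contracted_nodes V E \<and> y \<in> contracted_nodes V E}
     \<union> {(u, w). u \<in> V \<and> is_hybrid E u \<and> (\<exists>c. (u, c) \<in> E \<and> (c, w) \<in> E)}"

definition cluster :: "'a set \<Rightarrow> ('a \<times> 'a) set \<Rightarrow> 'a \<Rightarrow> 'a set" where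
  "cluster V E w = {l \<in> leaves V E. (w, l) \<in> E\<^sup>*}"

definition path_maximal :: "('a \<times> 'a) set \<Rightarrow> 'a set \<Rightarrow> 'a set" where
  "path_maximal E A = {w \<in> A. \<not> (\<exists>w'\<in>A. w' \<noteq> w \<and> (w', w) \<in> E\<^sup>*)}"

end

theory Submission imports Defs begin

locale tcn =
  fixes V :: "'a set" and E :: "('a \<times> 'a) set" and lab :: "'a \<Rightarrow> 's" and S :: "'s set"
  assumes tc: "tree_child_network V E lab S"
    and hp: "hybrid_parents_unconnected V E"
begin

abbreviation "V' \<equiv> contracted_nodes V E"
abbreviation "E' \<equiv> contracted_arcs V E"

lemma finV: "finite V" and EV: "E \<subseteq> V \<times> V" and acyc: "acyclic E"
  using tc unfolding tree_child_network_def rooted_dag_def by auto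

lemma tcv: "v \<in> V \<Longrightarrow> v \<notin> leaves V E \<Longrightarrow> \<exists>c\<in>children E v. is_tree_node E c"
  and tno: "v \<in> V \<Longrightarrow> is_tree_node E v \<Longrightarrow> outdeg E v \<noteq> 1"
  and hyo: "v \<in> V \<Longrightarrow> is_hybrid E v \<Longrightarrow> outdeg E v = 1"
  using tc unfolding tree_child_network_def by auto

lemma fin_children: "finite (children E x)"
proof -
  have "children E x \<subseteq> V" using EV by (auto simp: children_def)
  thus ?thesis using finV finite_subset by blast
qed

lemma fin_parents: "finite (parents E x)"
proof -
  have "parents E x \<subseteq> V" using EV by (auto simp: parents_def)
  thus ?thesis using finV finite_subset by blast
qed

lemma tree_or_hybrid: "is_tree_node E v \<longleftrightarrow> \<not> is_hybrid E v"
  by (auto simp: is_tree_node_def is_hybrid_def)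

lemma hyb_child: assumes "h \<in> V" "is_hybrid E h" obtains c where "children E h = {c}"
  using hyo[OF assms] by (metis One_nat_def card_1_singleton_iff outdeg_def)

lemma hyb_child_tree: assumes "h \<in> V" "is_hybrid E h" "children E h = {c}"
  shows "is_tree_node E c"
proof -
  have "h \<notin> leaves V E" using hyo[OF assms(1,2)] by (simp add: leaves_def)
  then show ?thesis using tcv[OF assms(1)] assms(3) by auto
qed

lemma tree_parent: assumes "is_tree_node E t" "(x,t) \<in> E" shows "parents E t = {x}"
proof -
  have "card (parents E t) \<le> 1" using assms(1) by (simp add: is_tree_node_def indeg_def)
  moreover have "x \<in> parents E t" using assms(2) by (simp add: parents_def)
  ultimately show ?thesis using fin_parents
    by (metis card_le_Suc0_iff_eq One_nat_def empty_iff insertI1 subsetI subset_antisym singletonD insert_subset) 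
qed

lemma removed: assumes "h \<in> V" "is_hybrid E h" "(h,c) \<in> E"
  shows "is_tree_node E c" "parents E c = {h}" "children E h = {c}"
proof -
  obtain c' where c': "children E h = {c'}" using hyb_child assms by blast
  then have "c = c'" using assms(3) by (auto simp: children_def)
  then show "children E h = {c}" using c' by simp
  show t: "is_tree_node E c" using hyb_child_tree assms c' \<open>c = c'\<close> by simp
  show "parents E c = {h}" using tree_parent[OF t assms(3)] .
qed

lemma nonhyb_child_V': assumes "x \<in> V" "\<not> is_hybrid E x" "(x,y) \<in> E" shows "y \<in> V'"
proof -
  have "y \<in> V" using assms EV by auto
  moreover have False if "h \<in> V" "is_hybrid E h" "(h,y) \<in> E" for h
  proof -
    have "parents E y = {h}" using removed that by blast
    moreover have "x \<in> parents E y" using assms(3) by (simp add: parents_def)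
    ultimately show False using assms(2) that(2) by auto
  qed
  ultimately show ?thesis unfolding contracted_nodes_def by blast
qed

lemma hyb_V': assumes "h \<in> V" "is_hybrid E h" shows "h \<in> V'"
proof -
  have False if "x \<in> V" "is_hybrid E x" "(x,h) \<in> E" for x
    using removed(1)[OF that] assms(2) tree_or_hybrid by blast
  then show ?thesis using assms unfolding contracted_nodes_def by blast
qed

lemma V'V: "V' \<subseteq> V" unfolding contracted_nodes_def by auto

lemma E'V': "E' \<subseteq> V' \<times> V'"
proof
  fix p assume "p \<in> E'"
  then obtain a b where p: "p = (a,b)" by (cases p)
  show "p \<in> V' \<times> V'"
  proof (cases "(a,b) \<in> E \<and> a \<in> V' \<and> b \<in> V'")
    case True then show ?thesis using p by auto
  next
    case False
    then obtain c where h: "a \<in> V" "is_hybrid E a" "(a,c) \<in> E" "(c,b) \<in> E"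
      using \<open>p \<in> E'\<close> p unfolding contracted_arcs_def by auto
    have "c \<in> V" using h EV by auto
    moreover have "\<not> is_hybrid E c" using removed(1)[OF h(1-3)] tree_or_hybrid by blast
    ultimately have "b \<in> V'" using nonhyb_child_V' h(4) by blast
    then show ?thesis using hyb_V'[OF h(1,2)] p by auto
  qed
qed

lemma E'E: "E' \<subseteq> E\<^sup>+"
  unfolding contracted_arcs_def by auto

lemma E'trancl1: "(a,b) \<in> E'\<^sup>+ \<Longrightarrow> (a,b) \<in> E\<^sup>+"
  by (induct rule: trancl_induct) (use E'E in \<open>auto intro: trancl_trans\<close>)

lemma E'trancl: "E'\<^sup>+ \<subseteq> E\<^sup>+"
  using E'trancl1 by auto

lemma acyc': "acyclic E'"
  using acyc E'trancl unfolding acyclic_def by blast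

lemma finE': "finite E'"
  using E'V' V'V finV by (meson finite_SigmaI finite_subset)

lemma children_nonhyb: assumes "w \<in> V'" "\<not> is_hybrid E w"
  shows "children E' w = children E w"
proof -
  have "(w,v) \<in> E' \<longleftrightarrow> (w,v) \<in> E" for v
  proof
    assume "(w,v) \<in> E'"
    then show "(w,v) \<in> E" using assms(2) unfolding contracted_arcs_def by blast
  next
    assume wv: "(w,v) \<in> E"
    have "v \<in> V'" using nonhyb_child_V'[OF _ assms(2) wv] assms(1) V'V by blast
    then show "(w,v) \<in> E'" using wv assms(1) unfolding contracted_arcs_def by blast
  qed
  then show ?thesis unfolding children_def by blast
qed

lemma children_hyb: assumes "w \<in> V'" "is_hybrid E w" "children E w = {c}"
  shows "children E' w = children E c"
proof -
  have cw: "(w,c) \<in> E" using assms(3) by (auto simp: children_def)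
  have wV: "w \<in> V" using assms(1) V'V by blast
  have "c \<notin> V'" using assms(2) cw wV unfolding contracted_nodes_def by blast
  have yc: "(w,y) \<in> E \<Longrightarrow> y = c" for y using assms(3) unfolding children_def by blast
  have "(w,v) \<in> E' \<longleftrightarrow> (c,v) \<in> E" for v
  proof
    assume "(w,v) \<in> E'"
    then show "(c,v) \<in> E" using yc \<open>c \<notin> V'\<close> unfolding contracted_arcs_def by blast
  next
    assume "(c,v) \<in> E"
    then show "(w,v) \<in> E'" using wV assms(2) cw unfolding contracted_arcs_def by blast
  qed
  then show ?thesis unfolding children_def by blast
qed

lemma noncomp: assumes "x \<in> V" "(x,c1) \<in> E" "(x,c2) \<in> E" "c1 \<noteq> c2" "(c1,c2) \<in> E\<^sup>+"
  shows False
proof -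
  obtain p where p: "(c1,p) \<in> E\<^sup>*" "(p,c2) \<in> E" using tranclD2[OF assms(5)] by blast
  have xp: "(x,p) \<in> E\<^sup>*" using assms(2) p(1) by simp
  have "p \<noteq> x"
  proof
    assume "p = x"
    then have "(x,x) \<in> E\<^sup>+" using assms(2) p(1) by simp
    then show False using acyc unfolding acyclic_def by blast
  qed
  have "{x,p} \<subseteq> parents E c2" using assms(3) p(2) by (auto simp: parents_def)
  then have "card {x,p} \<le> card (parents E c2)" using fin_parents card_mono by blast
  then have "is_hybrid E c2" using \<open>p \<noteq> x\<close> by (auto simp: is_hybrid_def indeg_def)
  moreover have "c2 \<in> V" using assms(3) EV by auto
  ultimately show False using hp xp \<open>{x,p} \<subseteq> parents E c2\<close> \<open>p \<noteq> x\<close>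
    unfolding hybrid_parents_unconnected_def by blast
qed

lemma repr: assumes "w \<in> V'"
  shows "\<exists>x\<in>V. children E' w = children E x \<and> is_tree_node E x \<and>
     (\<forall>t. (x,t) \<in> E \<longrightarrow> is_tree_node E t \<longrightarrow> (\<forall>y. (y,t) \<in> E' \<longrightarrow> y = w))"
proof (cases "is_hybrid E w")
  case False
  have wV: "w \<in> V" using assms V'V by auto
  have "(\<forall>t. (w,t) \<in> E \<longrightarrow> is_tree_node E t \<longrightarrow> (\<forall>y. (y,t) \<in> E' \<longrightarrow> y = w))"
  proof (intro allI impI)
    fix t y assume t: "(w,t) \<in> E" "is_tree_node E t" and y: "(y,t) \<in> E'"
    have pt: "parents E t = {w}" using tree_parent[OF t(2,1)] .
    show "y = w"
    proof (cases "(y,t) \<in> E")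
      case True then show ?thesis using pt by (auto simp: parents_def)
    next
      case False
      then obtain c where c: "y \<in> V" "is_hybrid E y" "(y,c) \<in> E" "(c,t) \<in> E"
        using y unfolding contracted_arcs_def by auto
      then have "c = w" using pt by (auto simp: parents_def)
      then have "w \<notin> V'" using c unfolding contracted_nodes_def by auto
      then show ?thesis using assms by simp
    qed
  qed
  then show ?thesis using wV False children_nonhyb[OF assms False] tree_or_hybrid by blast
next
  case True
  have wV: "w \<in> V" using assms V'V by auto
  obtain c where c: "children E w = {c}" using hyb_child[OF wV True] by blast
  have wc: "(w,c) \<in> E" using c by (auto simp: children_def)
  have cV: "c \<in> V" using wc EV by auto
  have ct: "is_tree_node E c" using removed(1)[OF wV True wc] .
  have cnV: "c \<notin> V'" using wV True wc unfolding contracted_nodes_def by auto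
  have pc: "parents E c = {w}" using removed(2)[OF wV True wc] .
  have "(\<forall>t. (c,t) \<in> E \<longrightarrow> is_tree_node E t \<longrightarrow> (\<forall>y. (y,t) \<in> E' \<longrightarrow> y = w))"
  proof (intro allI impI)
    fix t y assume t: "(c,t) \<in> E" "is_tree_node E t" and y: "(y,t) \<in> E'"
    have pt: "parents E t = {c}" using tree_parent[OF t(2,1)] .
    show "y = w"
    proof (cases "(y,t) \<in> E \<and> y \<in> V'")
      case True then show ?thesis using pt cnV by (auto simp: parents_def)
    next
      case False
      then obtain c' where c': "y \<in> V" "is_hybrid E y" "(y,c') \<in> E" "(c',t) \<in> E"
        using y unfolding contracted_arcs_def by auto
      then have "c' = c" using pt by (auto simp: parents_def)
      then show ?thesis using pc c' by (auto simp: parents_def)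
    qed
  qed
  then show ?thesis using cV ct children_hyb[OF assms True c] by blast
qed

lemma noncomp': assumes "w \<in> V'" "c1 \<in> children E' w" "c2 \<in> children E' w" "c1 \<noteq> c2"
  "(c1,c2) \<in> E'\<^sup>+" shows False
proof -
  obtain x where x: "x \<in> V" "children E' w = children E x" using repr[OF assms(1)] by blast
  show False using noncomp[OF x(1), of c1 c2] assms x E'trancl by (auto simp: children_def)
qed

lemma wfE': "wf (E'\<inverse>)"
  using finite_acyclic_wf[of "E'\<inverse>"] finE' acyc' by simp

lemma leafP: "w \<in> V' \<Longrightarrow> \<exists>l. l \<in> leaves V' E' \<and> (w,l) \<in> E'\<^sup>* \<and>
   (\<forall>x. (x,l) \<in> E'\<^sup>* \<longrightarrow> (x,w) \<in> E'\<^sup>* \<or> (w,x) \<in> E'\<^sup>*)"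
proof (induction w rule: wf_induct_rule[OF wfE'])
  case (1 w)
  show ?case
  proof (cases "children E' w = {}")
    case True
    then have "w \<in> leaves V' E'" using 1(2) by (simp add: leaves_def outdeg_def)
    then show ?thesis by blast
  next
    case False
    obtain x where x: "x \<in> V" "children E' w = children E x" "is_tree_node E x"
      "\<And>t y. (x,t) \<in> E \<Longrightarrow> is_tree_node E t \<Longrightarrow> (y,t) \<in> E' \<Longrightarrow> y = w"
      using repr[OF 1(2)] by blast
    have "x \<notin> leaves V E" using False x(2) fin_children by (simp add: leaves_def outdeg_def)
    then obtain t where t: "t \<in> children E x" "is_tree_node E t" using tcv[OF x(1)] by blast
    have wt: "(w,t) \<in> E'" using t(1) x(2) by (auto simp: children_def)
    have tV: "t \<in> V'" using wt E'V' by auto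
    obtain l where l: "l \<in> leaves V' E'" "(t,l) \<in> E'\<^sup>*"
      "\<And>z. (z,l) \<in> E'\<^sup>* \<Longrightarrow> (z,t) \<in> E'\<^sup>* \<or> (t,z) \<in> E'\<^sup>*"
      using 1(1)[of t] wt tV by blast
    have "(z,w) \<in> E'\<^sup>* \<or> (w,z) \<in> E'\<^sup>*" if "(z,l) \<in> E'\<^sup>*" for z
    proof -
      from l(3)[OF that] show ?thesis
      proof
        assume "(t,z) \<in> E'\<^sup>*" then show ?thesis using wt by (meson converse_rtrancl_into_rtrancl)
      next
        assume zt: "(z,t) \<in> E'\<^sup>*"
        show ?thesis
        proof (cases "z = t")
          case True then show ?thesis using wt by auto
        next
          case False
          then have ztp: "(z,t) \<in> E'\<^sup>+" using zt by (metis rtranclD)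
          obtain y where zy: "(z,y) \<in> E'\<^sup>*" and yt: "(y,t) \<in> E'" using tranclD2[OF ztp] by blast
          have xt: "(x,t) \<in> E" using t(1) by (simp add: children_def)
          have "y = w" using x(4)[OF xt t(2) yt] .
          then show ?thesis using zy by simp
        qed
      qed
    qed
    then show ?thesis using l wt by (meson converse_rtrancl_into_rtrancl)
  qed
qed

lemma F: assumes "w \<in> V'" "cluster V' E' w \<subset> cluster V' E' u" shows "(u,w) \<in> E'\<^sup>+"
proof -
  obtain l where l: "l \<in> leaves V' E'" "(w,l) \<in> E'\<^sup>*"
      "\<And>z. (z,l) \<in> E'\<^sup>* \<Longrightarrow> (z,w) \<in> E'\<^sup>* \<or> (w,z) \<in> E'\<^sup>*" using leafP[OF assms(1)] by blast
  have "l \<in> cluster V' E' w" using l by (simp add: cluster_def)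
  then have "(u,l) \<in> E'\<^sup>*" using assms(2) by (auto simp: cluster_def)
  then have "(u,w) \<in> E'\<^sup>* \<or> (w,u) \<in> E'\<^sup>*" using l(3) by blast
  moreover have "(w,u) \<notin> E'\<^sup>*"
  proof
    assume "(w,u) \<in> E'\<^sup>*"
    then have "cluster V' E' u \<subseteq> cluster V' E' w" by (auto simp: cluster_def)
    then show False using assms(2) by blast
  qed
  moreover have "u \<noteq> w" using assms(2) by blast
  ultimately show ?thesis by (meson rtranclD)
qed

lemma D: assumes "u \<in> V'" "c \<in> children E' u" shows "cluster V' E' c \<subset> cluster V' E' u"
proof -
  have uc: "(u,c) \<in> E'" using assms(2) by (simp add: children_def)
  have sub: "cluster V' E' c \<subseteq> cluster V' E' u" using uc
    by (auto simp: cluster_def intro: converse_rtrancl_into_rtrancl)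
  obtain x where x: "x \<in> V" "children E' u = children E x" "is_tree_node E x"
    using repr[OF assms(1)] by blast
  have "outdeg E x \<noteq> 1" using tno x by blast
  moreover have "outdeg E x \<noteq> 0" using assms(2) x(2) fin_children by (auto simp: outdeg_def)
  ultimately have "\<exists>d \<in> children E x. d \<noteq> c"
    proof -
    show ?thesis proof (rule ccontr)
    assume "\<not> ?thesis"
    then have "children E x \<subseteq> {c}" by blast
    then have "card (children E x) \<le> 1" using card_mono[of "{c}"] by fastforce
    then show False using \<open>outdeg E x \<noteq> 1\<close> \<open>outdeg E x \<noteq> 0\<close> unfolding outdeg_def by linarith
  qed qed
  then obtain d where d: "d \<in> children E' u" "d \<noteq> c" using x(2) by blast
  have ud: "(u,d) \<in> E'" using d by (simp add: children_def)
  have dV: "d \<in> V'" using ud E'V' by auto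
  obtain l where l: "l \<in> leaves V' E'" "(d,l) \<in> E'\<^sup>*"
      "\<And>z. (z,l) \<in> E'\<^sup>* \<Longrightarrow> (z,d) \<in> E'\<^sup>* \<or> (d,z) \<in> E'\<^sup>*" using leafP[OF dV] by blast
  have "l \<in> cluster V' E' u" using l ud by (auto simp: cluster_def intro: converse_rtrancl_into_rtrancl)
  moreover have "l \<notin> cluster V' E' c"
  proof
    assume "l \<in> cluster V' E' c"
    then have "(c,l) \<in> E'\<^sup>*" by (simp add: cluster_def)
    then have "(c,d) \<in> E'\<^sup>* \<or> (d,c) \<in> E'\<^sup>*" using l(3) by blast
    then have "(c,d) \<in> E'\<^sup>+ \<or> (d,c) \<in> E'\<^sup>+" using d(2) by (metis rtranclD)
    then show False using noncomp'[OF assms(1)] assms(2) d by blast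
  qed
  ultimately have "cluster V' E' c \<noteq> cluster V' E' u" by blast
  then show ?thesis using sub by (rule psubsetI[rotated])
qed


lemma main: assumes "u \<in> V'"
  shows "path_maximal E' {w \<in> V'. cluster V' E' w \<subset> cluster V' E' u} = children E' u"
proof -
  define A where "A = {w \<in> V'. cluster V' E' w \<subset> cluster V' E' u}"
  have chA: "c \<in> A" if cch: "c \<in> children E' u" for c
  proof -
    have uc: "(u,c) \<in> E'" using cch by (simp add: children_def)
    have "c \<in> V'" using uc E'V' by blast
    moreover have "cluster V' E' c \<subset> cluster V' E' u" using D[OF assms cch] .
    ultimately show ?thesis unfolding A_def by blast
  qed
  have AF: "(u,w) \<in> E'\<^sup>+" if "w \<in> A" for w
  proof -
    have "w \<in> V'" "cluster V' E' w \<subset> cluster V' E' u" using that unfolding A_def by blast+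
    then show ?thesis by (rule F)
  qed
  have 1: "w \<in> children E' u" if w: "w \<in> path_maximal E' A" for w
  proof -
    have wA: "w \<in> A" using w unfolding path_maximal_def by blast
    have nmax: "\<And>w'. w' \<in> A \<Longrightarrow> w' \<noteq> w \<Longrightarrow> (w', w) \<notin> E'\<^sup>*"
      using w unfolding path_maximal_def by blast
    obtain c where c: "(u,c) \<in> E'" "(c,w) \<in> E'\<^sup>*" using tranclD[OF AF[OF wA]] by blast
    have cch: "c \<in> children E' u" using c by (simp add: children_def)
    have "c = w" using nmax[OF chA[OF cch]] c(2) by blast
    then show ?thesis using cch by simp
  qed
  have 2: "c \<in> path_maximal E' A" if cch: "c \<in> children E' u" for c
  proof -
    have nm: False if h: "w' \<in> A" "w' \<noteq> c" "(w',c) \<in> E'\<^sup>*" for w'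
    proof -
      obtain c' where c': "(u,c') \<in> E'" "(c',w') \<in> E'\<^sup>*" using tranclD[OF AF[OF h(1)]] by blast
      have wc: "(w',c) \<in> E'\<^sup>+" using h(2,3) by (metis rtranclD)
      have cc: "(c',c) \<in> E'\<^sup>+" using c'(2) wc by (rule rtrancl_trancl_trancl)
      have "c' \<noteq> c" using cc acyc' unfolding acyclic_def by blast
      moreover have "c' \<in> children E' u" using c'(1) by (simp add: children_def)
      ultimately show False using noncomp'[OF assms _ cch _ cc] by blast
    qed
    show ?thesis unfolding path_maximal_def using chA[OF cch] nm by blast
  qed
  have "path_maximal E' A = children E' u" using 1 2 by blast
  then show ?thesis unfolding A_def .
qed

end

theorem lemma7:
  fixes V :: "'a set" and E :: "('a \<times> 'a) set" and lab :: "'a \<Rightarrow> 's" and S :: "'s set"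
  assumes "tree_child_network V E lab S"
    and "hybrid_parents_unconnected V E"
    and "u \<in> contracted_nodes V E"
  shows "path_maximal (contracted_arcs V E)
           {w \<in> contracted_nodes V E.
              cluster (contracted_nodes V E) (contracted_arcs V E) w
              \<subset> cluster (contracted_nodes V E) (contracted_arcs V E) u}
         = children (contracted_arcs V E) u"
proof -
  interpret tcn V E lab S using assms(1,2) by unfold_locales
  show ?thesis using main[OF assms(3)] .
qed

end
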